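(* Let $r\geq 3$. If a graph $G$ of order $n$ contains a complete subgraph $K_{r+1}$ and has minimum degree $$\delta(G)>\left(\frac{r-1}{r}-\frac{1}{r^{2}(r^{2}-1)}\right)n,$$ then $$js^{(2,r+1,2)}(G)>\frac{n^{r-1}}{r^{r+3}}.$$
   Context: All graphs are finite and simple; $\delta(G)$ is the minimum degree. For an integer $r\geq 2$, $js^{(2,r+1,2)}(G)$ is the maximum, over all edges $uv$ of $G$, of the number of $(r+1)$-cliques of $G$ containing both $u$ and $v$ (and $0$ if $G$ has no edges). *)

theory Defs
  imports Complex_Main
begin

definition simple_graph :: "'a set \<Rightarrow> ('a \<Rightarrow> 'a \<Rightarrow> bool) \<Rightarrow> bool" where
  "simple_graph V E \<longleftrightarrow> finite V \<and> (\<forall>u v. E u v \<longrightarrow> u \<in> V \<and> v \<in> V)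
     \<and> (\<forall>u v. E u v \<longrightarrow> E v u) \<and> (\<forall>v. \<not> E v v)"

definition degree :: "'a set \<Rightarrow> ('a \<Rightarrow> 'a \<Rightarrow> bool) \<Rightarrow> 'a \<Rightarrow> nat" where
  "degree V E v = card {u \<in> V. E v u}"

definition min_degree :: "'a set \<Rightarrow> ('a \<Rightarrow> 'a \<Rightarrow> bool) \<Rightarrow> nat" where
  "min_degree V E = Min (degree V E ` V)"

definition is_clique :: "'a set \<Rightarrow> ('a \<Rightarrow> 'a \<Rightarrow> bool) \<Rightarrow> 'a set \<Rightarrow> bool" where
  "is_clique V E K \<longleftrightarrow> K \<subseteq> V \<and> (\<forall>u\<in>K. \<forall>v\<in>K. u \<noteq> v \<longrightarrow> E u v)"

definition cliques :: "'a set \<Rightarrow> ('a \<Rightarrow> 'a \<Rightarrow> bool) \<Rightarrow> nat \<Rightarrow> 'a set set" where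
  "cliques V E k = {K. is_clique V E K \<and> card K = k}"

text \<open>js^(2,k,2)(G): maximum over edges uv of the number of k-cliques containing u and v
  (0 if there are no edges).\<close>
definition js :: "'a set \<Rightarrow> ('a \<Rightarrow> 'a \<Rightarrow> bool) \<Rightarrow> nat \<Rightarrow> nat" where
  "js V E k = Max (insert 0 {card {K \<in> cliques V E k. u \<in> K \<and> v \<in> K} | u v. u \<in> V \<and> v \<in> V \<and> E u v})"

end

theory Submission
  imports Defs
begin

definition cl :: "('a \<Rightarrow> 'a \<Rightarrow> bool) \<Rightarrow> 'a set \<Rightarrow> nat \<Rightarrow> 'a set set" where
 "cl E H k = {C. C \<subseteq> H \<and> card C = k \<and> (\<forall>x\<in>C. \<forall>y\<in>C. x \<noteq> y \<longrightarrow> E x y)}"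

lemma cl_finite: "finite H \<Longrightarrow> finite (cl E H k)"
  unfolding cl_def by (rule finite_subset[of _ "Pow H"]) auto

lemma cl_zero: "finite H \<Longrightarrow> cl E H 0 = {{}}"
  unfolding cl_def by (auto dest: finite_subset)

lemma cl_card_with:
  assumes "finite H" "w \<in> H" "\<And>x. \<not> E x x" "\<And>x y. E x y \<Longrightarrow> E y x"
  shows "card {C \<in> cl E H (Suc k). w \<in> C} = card (cl E (H \<inter> {u. E w u}) k)"
proof -
  have inj: "inj_on (insert w) (cl E (H \<inter> {u. E w u}) k)"
    unfolding inj_on_def cl_def by (metis (no_types, lifting) Int_iff assms(3) insert_ident mem_Collect_eq subsetD)
  have img: "insert w ` cl E (H \<inter> {u. E w u}) k = {C \<in> cl E H (Suc k). w \<in> C}"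
  proof
    show "insert w ` cl E (H \<inter> {u. E w u}) k \<subseteq> {C \<in> cl E H (Suc k). w \<in> C}"
    proof
      fix C' assume "C' \<in> insert w ` cl E (H \<inter> {u. E w u}) k"
      then obtain C where C: "C \<in> cl E (H \<inter> {u. E w u}) k" "C' = insert w C" by blast
      have fC: "finite C" using C(1) assms(1) unfolding cl_def by (auto intro: finite_subset)
      have wC: "w \<notin> C" using C(1) assms(3) unfolding cl_def by auto
      show "C' \<in> {C \<in> cl E H (Suc k). w \<in> C}"
        using C fC wC assms(2,4) unfolding cl_def by auto
    qed
  next
    show "{C \<in> cl E H (Suc k). w \<in> C} \<subseteq> insert w ` cl E (H \<inter> {u. E w u}) k"
    proof
      fix C' assume C': "C' \<in> {C \<in> cl E H (Suc k). w \<in> C}"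
      have fC: "finite C'" using C' assms(1) unfolding cl_def by (auto intro: finite_subset)
      have "C' - {w} \<in> cl E (H \<inter> {u. E w u}) k"
        using C' fC unfolding cl_def by auto
      moreover have "C' = insert w (C' - {w})" using C' by auto
      ultimately show "C' \<in> insert w ` cl E (H \<inter> {u. E w u}) k" by blast
    qed
  qed
  show ?thesis using card_image[OF inj] img by simp
qed

lemma card_swap:
  assumes "finite A" "finite B"
  shows "(\<Sum>x\<in>A. card {y\<in>B. R x y}) = (\<Sum>y\<in>B. card {x\<in>A. R x y})"
  using sum.swap_restrict[OF assms, of "\<lambda>_ _. (1::nat)" R] by simp

lemma cl_double:
  assumes "finite H" "\<And>x. \<not> E x x" "\<And>x y. E x y \<Longrightarrow> E y x"
  shows "Suc k * card (cl E H (Suc k)) = (\<Sum>w\<in>H. card (cl E (H \<inter> {u. E w u}) k))"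
proof -
  let ?S = "cl E H (Suc k)"
  have fS: "finite ?S" using cl_finite assms(1) by blast
  have "(\<Sum>C\<in>?S. card {w\<in>H. w \<in> C}) = (\<Sum>C\<in>?S. Suc k)"
  proof (rule sum.cong)
    fix C assume "C \<in> ?S"
    then have "{w\<in>H. w \<in> C} = C" "card C = Suc k" unfolding cl_def by auto
    then show "card {w\<in>H. w \<in> C} = Suc k" by simp
  qed simp
  then have "Suc k * card ?S = (\<Sum>C\<in>?S. card {w\<in>H. w \<in> C})" by simp
  also have "\<dots> = (\<Sum>w\<in>H. card {C\<in>?S. w \<in> C})" by (rule card_swap[OF fS assms(1)])
  also have "\<dots> = (\<Sum>w\<in>H. card (cl E (H \<inter> {u. E w u}) k))"
    by (rule sum.cong) (auto intro: cl_card_with[OF assms(1) _ assms(2,3)])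
  finally show ?thesis .
qed

definition fk :: "real \<Rightarrow> nat \<Rightarrow> real \<Rightarrow> real" where
 "fk d k m = (\<Prod>i<k. m - real i * d) / fact k"

lemma fk_mono:
  assumes "d \<ge> 0" "(real k - 1) * d \<le> m" "m \<le> m'"
  shows "0 \<le> fk d k m \<and> fk d k m \<le> fk d k m'"
proof -
  have f: "0 \<le> m - real i * d" if "i < k" for i
  proof -
    have "real i \<le> real k - 1" using that by linarith
    then have "real i * d \<le> (real k - 1) * d" using assms(1) by (rule mult_right_mono)
    then show ?thesis using assms(2) by linarith
  qed
  have "0 \<le> (\<Prod>i<k. m - real i * d)" by (rule prod_nonneg) (use f in auto)
  moreover have "(\<Prod>i<k. m - real i * d) \<le> (\<Prod>i<k. m' - real i * d)"
    by (rule prod_mono) (use f assms(3) in auto)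
  ultimately show ?thesis unfolding fk_def by (auto intro: divide_right_mono)
qed

lemma fk_Suc: "fk d (Suc k) m = m * fk d k (m - d) / real (Suc k)"
proof -
  have "(\<Prod>i<Suc k. m - real i * d) = m * (\<Prod>i<k. (m - d) - real i * d)"
    by (subst prod.lessThan_Suc_shift) (simp add: algebra_simps del: prod.lessThan_Suc)
  then show ?thesis unfolding fk_def by (simp add: field_simps)
qed

lemma clique_count:
  assumes fin: "finite V" and irr: "\<And>x. \<not> E x x" and sym: "\<And>x y. E x y \<Longrightarrow> E y x"
   and d0: "d \<ge> 0"
   and nb: "\<And>H w. H \<subseteq> V \<Longrightarrow> w \<in> V \<Longrightarrow> real (card (H \<inter> {u. E w u})) \<ge> real (card H) - d"
  shows "H \<subseteq> V \<Longrightarrow> (real k - 1) * d \<le> real (card H) \<Longrightarrow> fk d k (real (card H)) \<le> real (card (cl E H k))"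
proof (induction k arbitrary: H)
  case 0
  then have "finite H" using fin finite_subset by blast
  then show ?case by (simp add: fk_def cl_zero)
next
  case (Suc k)
  have fH: "finite H" using Suc.prems fin finite_subset by blast
  let ?m = "real (card H)"
  have step: "fk d k (?m - d) \<le> real (card (cl E (H \<inter> {u. E w u}) k))" if w: "w \<in> H" for w
  proof -
    have sub: "H \<inter> {u. E w u} \<subseteq> V" using Suc.prems by blast
    have c: "real (card (H \<inter> {u. E w u})) \<ge> ?m - d" using nb[OF Suc.prems(1)] w Suc.prems(1) by blast
    have lo: "(real k - 1) * d \<le> ?m - d" using Suc.prems(2) by (simp add: algebra_simps)
    have "fk d k (?m - d) \<le> fk d k (real (card (H \<inter> {u. E w u})))" using fk_mono[OF d0 lo c] by blast
    also have "\<dots> \<le> real (card (cl E (H \<inter> {u. E w u}) k))"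
      using Suc.IH[OF sub] lo c by linarith
    finally show ?thesis .
  qed
  have "real (Suc k) * fk d (Suc k) ?m = ?m * fk d k (?m - d)" by (simp add: fk_Suc)
  also have "\<dots> = (\<Sum>w\<in>H. fk d k (?m - d))" by simp
  also have "\<dots> \<le> (\<Sum>w\<in>H. real (card (cl E (H \<inter> {u. E w u}) k)))" by (rule sum_mono) (rule step)
  also have "\<dots> = real (\<Sum>w\<in>H. card (cl E (H \<inter> {u. E w u}) k))" by (simp only: of_nat_sum)
  also have "\<dots> = real (Suc k * card (cl E H (Suc k)))" by (simp only: cl_double[OF fH irr sym, where k=k])
  finally have "real (Suc k) * fk d (Suc k) ?m \<le> real (Suc k) * real (card (cl E H (Suc k)))" by (simp only: of_nat_mult)
  then show ?case by (rule mult_left_le_imp_le) simp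
qed

lemma arith_poly:
  fixes R N D i u w e :: real
  assumes "u*R = 1" "w*(R+1) = 1" "e*(R^2*(R^2-1)) = 1"
  shows "(2*(R-1)*(R+1)*D - R*(R-1)*N) * (u*w) - i*(N - D)
     = N*(R^2-2*R+2)*(e*u) + (R-2-i)*(N*u + N*e)
       + (2*(R-1)*u + i)*(D - ((R-1)*u - e)*N)"
  using assms by algebra
lemma final_ineq:
  fixes R N u e c g0 :: real and q :: nat
  assumes "R = real q + 2" "q \<ge> 1" "N > 0" "u*R = 1" "e*(R^2*(R^2-1)) = 1" "c*(R-1) = 1"
    and "g0 = N*(R^2-2*R+2)*(e*u)"
  shows "(N*u)^q * g0 / (real q + 1) > N^(q+1) / R^(q+3+2)"
proof -
  have R3: "R \<ge> 3" using assms by simp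
  have R9: "R^2 \<ge> 9" using R3 power_mono[of 3 R 2] by simp
  have key: "R^2*(R^2-2*R+2) - (R-1)*(R^2-1) > 0"
  proof -
    have "R^3*(R-3) \<ge> 0" using R3 by simp
    moreover have "R^2*(R^2-2*R+2) - (R-1)*(R^2-1) = R^3*(R-3) + 3*R^2 + R - 1"
      by (simp add: algebra_simps power2_eq_square power3_eq_cube)
    ultimately show ?thesis using R3 R9 by linarith
  qed
  have "u = 1/R" using assms(4) R3 by (simp add: eq_divide_eq)
  then have up: "u > 0" using R3 by simp
  have "R^2*(R^2-1) > 0" using R9 by (intro mult_pos_pos) auto
  moreover have "e = 1/(R^2*(R^2-1))" using assms(5) calculation by (metis less_irrefl eq_divide_eq)
  ultimately have ep: "e > 0" by simp
  have c1: "c = 1/(R-1)" using assms(6) R3 by (simp add: eq_divide_eq)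
  then have cp: "c > 0" using R3 by simp
  have id: "(R^2-2*R+2)*e*u*c - u^5 = (R^2*(R^2-2*R+2) - (R-1)*(R^2-1))*u^5*(e*R^2)*c"
    using assms(4,5,6) by algebra
  have "(R^2*(R^2-2*R+2) - (R-1)*(R^2-1))*u^5*(e*R^2)*c > 0"
    using key up ep cp R9 by (intro mult_pos_pos) auto
  then have pos: "(R^2-2*R+2)*e*u*c - u^5 > 0" using id by simp
  have lhs: "(N*u)^q * g0 / (real q + 1) = N^q*u^q*N * ((R^2-2*R+2)*e*u*c)"
  proof -
    have "real q + 1 = R - 1" using assms(1) by simp
    then have "1 / (real q + 1) = c" using c1 by simp
    then have "(N*u)^q * g0 / (real q + 1) = (N*u)^q * g0 * c" by (metis times_divide_eq_right mult_1_right)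
    also have "\<dots> = N^q*u^q*N * ((R^2-2*R+2)*e*u*c)" unfolding assms(7) power_mult_distrib by (simp only: mult_ac)
    finally show ?thesis .
  qed
  have rhs: "N^(q+1) / R^(q+3+2) = N^q*u^q*N * u^5"
  proof -
    have "1 / R = u" using assms(4) R3 by (simp add: field_simps)
    then have "1 / R^(q+3+2) = u^(q+5)" by (simp add: power_one_over[symmetric] add.commute)
    also have "\<dots> = u^q * u^5" by (rule power_add)
    finally have "1 / R^(q+3+2) = u^q * u^5" .
    then have "N^(q+1) / R^(q+3+2) = N^(q+1) * (u^q * u^5)" by (metis times_divide_eq_right mult_1_right)
    then show ?thesis by (simp only: power_add power_one_right mult_ac)
  qed
  have "N^q*u^q*N > 0" using assms(3) up by simp
  then show ?thesis unfolding lhs rhs using pos by (intro mult_strict_left_mono) auto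
qed
lemma pair_sum:
  assumes finV: "finite V" and finK: "finite K"
  shows "(\<Sum>u\<in>K. \<Sum>v\<in>K-{u}. card {w\<in>V. E w u \<and> E w v})
       = (\<Sum>w\<in>V. card {x\<in>K. E w x} * (card {x\<in>K. E w x} - 1))"
proof -
  have "(\<Sum>u\<in>K. \<Sum>v\<in>K-{u}. card {w\<in>V. E w u \<and> E w v})
      = (\<Sum>u\<in>K. \<Sum>w\<in>V. card {v\<in>K-{u}. E w u \<and> E w v})"
    by (rule sum.cong[OF refl], rule card_swap) (use finV finK in auto)
  also have "\<dots> = (\<Sum>w\<in>V. \<Sum>u\<in>K. card {v\<in>K-{u}. E w u \<and> E w v})" by (rule sum.swap)
  also have "\<dots> = (\<Sum>w\<in>V. card {x\<in>K. E w x} * (card {x\<in>K. E w x} - 1))"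
  proof (rule sum.cong[OF refl])
    fix w
    let ?T = "{x\<in>K. E w x}"
    have "(\<Sum>u\<in>K. card {v\<in>K-{u}. E w u \<and> E w v}) = (\<Sum>u\<in>K. if E w u then card (?T - {u}) else 0)"
    proof (rule sum.cong[OF refl])
      fix u
      show "card {v\<in>K-{u}. E w u \<and> E w v} = (if E w u then card (?T - {u}) else 0)"
      proof (cases "E w u")
        case True
        then have "{v\<in>K-{u}. E w u \<and> E w v} = ?T - {u}" by auto
        then show ?thesis using True by simp
      next
        case False
        then show ?thesis by simp
      qed
    qed
    also have "\<dots> = (\<Sum>u\<in>?T. card (?T - {u}))" by (simp add: sum.inter_filter[symmetric] finK)
    also have "\<dots> = (\<Sum>u\<in>?T. card ?T - 1)" by (rule sum.cong) (auto simp: finK)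
    also have "\<dots> = card ?T * (card ?T - 1)" by simp
    finally show "(\<Sum>u\<in>K. card {v\<in>K-{u}. E w u \<and> E w v}) = card ?T * (card ?T - 1)" .
  qed
  finally show ?thesis .
qed

lemma deg_sum:
  assumes finV: "finite V" and finK: "finite K" and sym: "\<And>x y. E x y \<Longrightarrow> E y x"
  shows "(\<Sum>w\<in>V. card {x\<in>K. E w x}) = (\<Sum>x\<in>K. degree V E x)"
proof -
  have "(\<Sum>w\<in>V. card {x\<in>K. E w x}) = (\<Sum>x\<in>K. card {w\<in>V. E w x})" by (rule card_swap[OF finV finK])
  also have "\<dots> = (\<Sum>x\<in>K. degree V E x)" unfolding degree_def
    by (rule sum.cong[OF refl], rule arg_cong[where f=card]) (auto intro: sym)
  finally show ?thesis .
qed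

lemma sq_ineq:
  fixes t r :: nat
  assumes r1: "r \<ge> 1"
  shows "real (t * (t - 1)) \<ge> 2*(real r - 1)*real t - real r*(real r - 1)"
proof -
  have "real (t * (t - 1)) = real t * (real t - 1)" by (cases t) (auto simp: algebra_simps)
  moreover have "(real t - (real r - 1)) * (real t - real r) \<ge> 0"
  proof (cases "t \<le> r - 1")
    case True
    then have "real t \<le> real r - 1" "real t \<le> real r" using r1 by linarith+
    then show ?thesis by (intro mult_nonpos_nonpos) auto
  next
    case False
    then have "real t \<ge> real r - 1" "real t \<ge> real r" using r1 by linarith+
    then show ?thesis by (intro mult_nonneg_nonneg) auto
  qed
  ultimately show ?thesis by (simp add: algebra_simps)
qed

theorem lemma5:
  fixes V :: "'a set" and E :: "'a \<Rightarrow> 'a \<Rightarrow> bool" and r n :: nat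
  assumes "simple_graph V E"
    and "card V = n"
    and "r \<ge> 3"
    and "cliques V E (r + 1) \<noteq> {}"
    and "real (min_degree V E) > ((real r - 1) / real r - 1 / (real r ^ 2 * (real r ^ 2 - 1))) * real n"
  shows "real (js V E (r + 1)) > real n ^ (r - 1) / real r ^ (r + 3)"
proof -
  from assms(1) have finV: "finite V" and inV: "\<And>u v. E u v \<Longrightarrow> u \<in> V \<and> v \<in> V"
    and sym: "\<And>u v. E u v \<Longrightarrow> E v u" and irr: "\<And>v. \<not> E v v"
    unfolding simple_graph_def by auto
  obtain K where K: "K \<in> cliques V E (r+1)" using assms(4) by blast
  hence KV: "K \<subseteq> V" and cK: "card K = r+1" and Kc: "\<And>x y. x\<in>K \<Longrightarrow> y\<in>K \<Longrightarrow> x\<noteq>y \<Longrightarrow> E x y"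
    unfolding cliques_def is_clique_def by auto
  have finK: "finite K" using finV KV finite_subset by blast
  have Kne: "K \<noteq> {}" using cK by auto
  then have Vne: "V \<noteq> {}" using KV by auto
  define R where "R = real r"
  define N where "N = real n"
  define \<delta> where "\<delta> = min_degree V E"
  have degge: "\<And>w. w\<in>V \<Longrightarrow> \<delta> \<le> degree V E w" unfolding \<delta>_def min_degree_def using finV by auto
  have degle: "degree V E w \<le> n" for w unfolding degree_def using assms(2) finV card_mono[of V "{u\<in>V. E w u}"] by auto
  obtain w0 where "w0 \<in> V" using Vne by blast
  then have \<delta>n: "\<delta> \<le> n" using degge degle le_trans by blast
  define d where "d = N - real \<delta>"
  have d0: "d \<ge> 0" unfolding d_def N_def using \<delta>n by simp
  have nb: "real (card (H \<inter> {u. E w u})) \<ge> real (card H) - d" if H: "H \<subseteq> V" and w: "w \<in> V" for H w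
  proof -
    have fH: "finite H" using H finV finite_subset by blast
    have c1: "card H = card (H \<inter> {u. E w u}) + card (H - {u. E w u})" by (rule card_Int_Diff[OF fH])
    have "card (H - {u. E w u}) \<le> card (V - {u\<in>V. E w u})" using H finV by (intro card_mono) auto
    moreover have "card (V - {u\<in>V. E w u}) = n - degree V E w"
      unfolding degree_def using finV assms(2) by (subst card_Diff_subset) auto
    ultimately have "card (H - {u. E w u}) + \<delta> \<le> n" using degge[OF w] degle[of w] by linarith
    then show ?thesis using c1 unfolding d_def N_def by linarith
  qed
  have R3: "R \<ge> 3" unfolding R_def using assms(3) by simp
  have "card V > 0" using finV Vne by (simp add: card_gt_0_iff)
  then have Npos: "N > 0" unfolding N_def using assms(2) by simp
  define t where "t w = card {x\<in>K. E w x}" for w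
  define c where "c u v = card {w\<in>V. E w u \<and> E w v}" for u v
  have sumt: "real (\<Sum>w\<in>V. t w) \<ge> (R+1) * real \<delta>"
  proof -
    have "(\<Sum>w\<in>V. t w) = (\<Sum>x\<in>K. degree V E x)" unfolding t_def by (rule deg_sum[OF finV finK sym])
    moreover have "(\<Sum>x\<in>K. degree V E x) \<ge> (\<Sum>x\<in>K. \<delta>)" using degge KV by (intro sum_mono) auto
    ultimately have "(\<Sum>w\<in>V. t w) \<ge> (r+1) * \<delta>" using cK by simp
    then have "real (\<Sum>w\<in>V. t w) \<ge> real ((r+1) * \<delta>)" by linarith
    then show ?thesis unfolding R_def by (simp add: algebra_simps)
  qed
  have sp: "(\<Sum>u\<in>K. \<Sum>v\<in>K-{u}. c u v) = (\<Sum>w\<in>V. t w * (t w - 1))"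
    unfolding c_def t_def by (rule pair_sum[OF finV finK])
  have sp2: "real (\<Sum>w\<in>V. t w * (t w - 1)) \<ge> 2*(R-1)*(R+1)*real \<delta> - R*(R-1)*N"
  proof -
    have "real (\<Sum>w\<in>V. t w * (t w - 1)) = (\<Sum>w\<in>V. real (t w * (t w - 1)))" by simp
    also have "\<dots> \<ge> (\<Sum>w\<in>V. 2*(R-1)*real (t w) - R*(R-1))"
      using sq_ineq[where r=r] assms(3) unfolding R_def by (intro sum_mono) auto
    finally have "real (\<Sum>w\<in>V. t w * (t w - 1)) \<ge> 2*(R-1)*(\<Sum>w\<in>V. real (t w)) - N*(R*(R-1))"
      unfolding N_def using assms(2) by (simp add: sum_subtractf sum_distrib_left)
    moreover have "(\<Sum>w\<in>V. real (t w)) \<ge> (R+1) * real \<delta>" using sumt by (simp only: of_nat_sum)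
    moreover have "R - 1 \<ge> 0" using R3 by simp
    ultimately have "real (\<Sum>w\<in>V. t w * (t w - 1)) \<ge> 2*(R-1)*((R+1) * real \<delta>) - N*(R*(R-1))"
      by (smt (verit) mult_left_mono)
    then show ?thesis by (simp add: algebra_simps)
  qed
  define uu where "uu = 1 / R"
  define ww where "ww = 1 / (R+1)"
  define ee where "ee = 1 / (R^2*(R^2-1))"
  define cc where "cc = 1 / (R-1)"
  have R9: "R^2 \<ge> 9" using R3 power_mono[of 3 R 2] by simp
  have uu1: "uu*R = 1" unfolding uu_def using R3 by simp
  have ww1: "ww*(R+1) = 1" unfolding ww_def using R3 by simp
  have ee1: "ee*(R^2*(R^2-1)) = 1" unfolding ee_def using R9 R3 by simp
  have cc1: "cc*(R-1) = 1" unfolding cc_def using R3 by simp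
  have uup: "uu > 0" unfolding uu_def using R3 by simp
  have eep: "ee > 0" unfolding ee_def using R9 by (intro divide_pos_pos mult_pos_pos) auto
  define \<mu> where "\<mu> = (2*(R-1)*(R+1)*real \<delta> - R*(R-1)*N) * (uu*ww)"
  have \<mu>avg: "(R+1)*R*\<mu> = 2*(R-1)*(R+1)*real \<delta> - R*(R-1)*N"
    unfolding \<mu>_def using uu1 ww1 by algebra
  have "\<exists>u\<in>K. \<exists>v\<in>K-{u}. real (c u v) \<ge> \<mu>"
  proof (rule ccontr)
    assume "\<not> ?thesis"
    then have lt: "\<And>u v. u\<in>K \<Longrightarrow> v\<in>K-{u} \<Longrightarrow> real (c u v) < \<mu>" by force
    have ne: "\<And>u. u \<in> K \<Longrightarrow> K - {u} \<noteq> {}"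
    proof -
      fix u assume "u \<in> K"
      then have "card (K - {u}) = r" using cK finK by simp
      then show "K - {u} \<noteq> {}" using assms(3) by (metis card.empty not_numeral_le_zero)
    qed
    have "real (\<Sum>u\<in>K. \<Sum>v\<in>K-{u}. c u v) = (\<Sum>u\<in>K. \<Sum>v\<in>K-{u}. real (c u v))" by simp
    also have "\<dots> < (\<Sum>u\<in>K. \<Sum>v\<in>K-{u}. \<mu>)"
      by (intro sum_strict_mono finK Kne finite_Diff ne lt) auto
    also have "\<dots> = (R+1)*R*\<mu>" using cK finK unfolding R_def by simp
    finally show False using \<mu>avg sp sp2 by linarith
  qed
  then obtain u v where u: "u\<in>K" and v: "v\<in>K" and uv: "u \<noteq> v" and cuv: "real (c u v) \<ge> \<mu>" by blast
  define H where "H = {w\<in>V. E w u \<and> E w v}"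
  have HV: "H \<subseteq> V" unfolding H_def by auto
  have cH: "real (card H) \<ge> \<mu>" using cuv unfolding c_def H_def .
  define \<delta>0 where "\<delta>0 = ((R-1)*uu - ee)*N"
  have \<delta>gt: "real \<delta> > \<delta>0"
  proof -
    have "(R-1)*uu = (R - 1) / R" unfolding uu_def by simp
    then show ?thesis using assms(5) unfolding \<delta>0_def \<delta>_def R_def N_def ee_def by simp
  qed
  define g0 where "g0 = N*(R^2-2*R+2)*(ee*uu)"
  have g0p: "g0 \<ge> 0"
  proof -
    have "R^2-2*R+2 = (R-1)^2 + 1" by (simp add: power2_eq_square algebra_simps)
    then have "R^2-2*R+2 > 0" by (smt (verit) zero_le_power2)
    then show ?thesis unfolding g0_def using Npos eep uup by simp
  qed
  have factor: "\<mu> - i*d = g0 + (R-2-i)*(N*uu + N*ee) + (2*(R-1)*uu + i)*(real \<delta> - \<delta>0)" for i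
    unfolding \<mu>_def d_def g0_def \<delta>0_def using arith_poly[OF uu1 ww1 ee1, of "real \<delta>" N i] by simp
  define q where "q = r - 2"
  have q: "r = q + 2" unfolding q_def using assms(3) by simp
  hence q1: "q \<ge> 1" using assms(3) by simp
  have Rq: "R = real q + 2" unfolding R_def q by simp
  have fac1: "\<mu> - real i * d \<ge> real (q - i) * (N*uu)" if "i < q" for i
  proof -
    have a: "R - 2 - real i = real (q - i)" using that Rq by simp
    have "(2*(R-1)*uu + real i)*(real \<delta> - \<delta>0) \<ge> 0" using R3 uup \<delta>gt by simp
    moreover have "real (q - i) * (N*ee) \<ge> 0" using Npos eep by simp
    ultimately show ?thesis using factor[of "real i"] g0p unfolding a by (simp add: algebra_simps)
  qed
  have fac2: "\<mu> - real q * d \<ge> g0"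
  proof -
    have a: "R - 2 - real q = 0" using Rq by simp
    have "(2*(R-1)*uu + real q)*(real \<delta> - \<delta>0) \<ge> 0" using R3 uup \<delta>gt by simp
    then show ?thesis using factor[of "real q"] unfolding a by simp
  qed
  have lowm: "(real (r-1) - 1) * d \<le> \<mu>" using fac2 g0p q by simp
  have cnt1: "fk d (r-1) \<mu> \<le> real (card (cl E H (r-1)))"
  proof -
    have "fk d (r-1) \<mu> \<le> fk d (r-1) (real (card H))" using fk_mono[OF d0 lowm cH] by blast
    also have "\<dots> \<le> real (card (cl E H (r-1)))"
      using lowm cH by (intro clique_count[OF finV irr sym d0 nb HV]) auto
    finally show ?thesis .
  qed
  define S where "S = {K' \<in> cliques V E (r+1). u \<in> K' \<and> v \<in> K'}"
  have Euv: "E u v" using Kc u v uv by blast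
  have uV: "u \<in> V" and vV: "v \<in> V" using KV u v by auto
  have "S \<subseteq> Pow V" unfolding S_def cliques_def is_clique_def by blast
  then have finS: "finite S" using finV finite_subset by blast
  have cnt2: "card (cl E H (r-1)) \<le> card S"
  proof (rule card_inj_on_le[where f="\<lambda>C. insert u (insert v C)"])
    have notin: "u \<notin> C" "v \<notin> C" if "C \<in> cl E H (r-1)" for C
    proof -
      have "C \<subseteq> H" using that unfolding cl_def by simp
      then have "\<forall>w\<in>C. E w u \<and> E w v" unfolding H_def by blast
      then show "u \<notin> C" "v \<notin> C" using irr by blast+
    qed
    show "inj_on (\<lambda>C. insert u (insert v C)) (cl E H (r-1))"
    proof (rule inj_onI)
      fix C1 C2 assume C1: "C1 \<in> cl E H (r-1)" and C2: "C2 \<in> cl E H (r-1)"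
        and eq: "insert u (insert v C1) = insert u (insert v C2)"
      have "C1 = insert u (insert v C1) - {u, v}" using notin[OF C1] by auto
      also have "\<dots> = insert u (insert v C2) - {u, v}" using eq by simp
      also have "\<dots> = C2" using notin[OF C2] by auto
      finally show "C1 = C2" .
    qed
    show "(\<lambda>C. insert u (insert v C)) ` cl E H (r-1) \<subseteq> S"
    proof
      fix X assume "X \<in> (\<lambda>C. insert u (insert v C)) ` cl E H (r-1)"
      then obtain C where C: "C \<in> cl E H (r-1)" and X: "X = insert u (insert v C)" by (rule imageE)
      have CH: "C \<subseteq> H" and cC: "card C = r - 1" and Cc: "\<forall>x\<in>C. \<forall>y\<in>C. x \<noteq> y \<longrightarrow> E x y"
        using C unfolding cl_def by simp_all
      have finC: "finite C" by (rule finite_subset[OF order_trans[OF CH HV] finV])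
      have "card X = Suc (Suc (card C))" unfolding X using notin[OF C] uv finC by simp
      then have "card X = r + 1" using cC q by simp
      moreover have "X \<subseteq> V" unfolding X using CH HV uV vV by blast
      moreover have "\<forall>x\<in>X. \<forall>y\<in>X. x \<noteq> y \<longrightarrow> E x y"
      proof (intro ballI impI)
        fix x y assume x: "x \<in> X" and y: "y \<in> X" and xy: "x \<noteq> y"
        have Cu: "E w u" "E w v" "E u w" "E v w" if "w \<in> C" for w
          using that CH sym unfolding H_def by blast+
        have Evu: "E v u" using Euv sym by blast
        have xs: "x = u \<or> x = v \<or> x \<in> C" using x unfolding X by blast
        have ys: "y = u \<or> y = v \<or> y \<in> C" using y unfolding X by blast
        show "E x y"
          using xs ys xy Cu Euv Evu Cc by metis
      qed
      moreover have "u \<in> X" "v \<in> X" unfolding X by auto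
      ultimately show "X \<in> S" by (simp add: S_def cliques_def is_clique_def)
    qed
  qed (rule finS)
  have cnt3: "card S \<le> js V E (r+1)"
  proof -
    let ?f = "\<lambda>p. card {K \<in> cliques V E (r+1). fst p \<in> K \<and> snd p \<in> K}"
    let ?A = "{card {K \<in> cliques V E (r+1). u \<in> K \<and> v \<in> K} | u v. u \<in> V \<and> v \<in> V \<and> E u v}"
    have sub: "?A \<subseteq> ?f ` (V \<times> V)"
    proof
      fix x assume "x \<in> ?A"
      then obtain a b where x: "x = card {K \<in> cliques V E (r+1). a \<in> K \<and> b \<in> K}" and ab: "a \<in> V" "b \<in> V"
        by blast
      show "x \<in> ?f ` (V \<times> V)" by (rule image_eqI[where x="(a,b)"]) (simp_all add: x ab)
    qed
    have "finite (?f ` (V \<times> V))" using finV by simp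
    then have "finite ?A" using sub finite_subset by blast
    moreover have "card S \<in> ?A" unfolding S_def using uV vV Euv by blast
    ultimately have "card S \<le> Max (insert 0 ?A)" by (intro Max_ge) auto
    then show ?thesis unfolding js_def .
  qed
  have fkval: "fk d (r-1) \<mu> \<ge> (N*uu)^q * g0 / (real q + 1)"
  proof -
    have rq: "r - 1 = Suc q" using q by simp
    have p1: "(\<Prod>i<q. \<mu> - real i * d) \<ge> (\<Prod>i<q. real (q - i) * (N*uu))"
      by (rule prod_mono) (use fac1 Npos uup in auto)
    have p2: "(\<Prod>i<q. real (q - i) * (N*uu)) = fact q * (N*uu)^q"
      by (simp add: prod.distrib fact_prod_rev atLeast0LessThan)
    have "(\<Prod>i<Suc q. \<mu> - real i * d) = (\<Prod>i<q. \<mu> - real i * d) * (\<mu> - real q * d)" by simp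
    also have "\<dots> \<ge> (fact q * (N*uu)^q) * g0"
      using p1 p2 fac2 g0p Npos uup by (intro mult_mono) (auto intro: prod_nonneg order.trans[OF _ p1])
    finally have "(\<Prod>i<Suc q. \<mu> - real i * d) \<ge> fact q * (N*uu)^q * g0" .
    then have "fk d (r-1) \<mu> \<ge> fact q * (N*uu)^q * g0 / fact (Suc q)"
      unfolding fk_def rq by (intro divide_right_mono) auto
    also have "fact q * (N*uu)^q * g0 / fact (Suc q) = (N*uu)^q * g0 / (real q + 1)"
    proof -
      have fs: "(fact (Suc q) :: real) = fact q * (real q + 1)" by (simp add: fact_Suc algebra_simps)
      have fq: "(fact q :: real) \<noteq> 0" by simp
      have "fact q * (N*uu)^q * g0 / fact (Suc q) = fact q * ((N*uu)^q * g0) / (fact q * (real q + 1))"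
        unfolding fs by (simp only: mult.assoc)
      also have "\<dots> = (N*uu)^q * g0 / (real q + 1)" by (rule nonzero_mult_divide_mult_cancel_left[OF fq])
      finally show ?thesis .
    qed
    finally show ?thesis by simp
  qed
  have fin: "(N*uu)^q * g0 / (real q + 1) > N^(q+1) / R^(q+3+2)"
    by (rule final_ineq[OF Rq q1 Npos uu1 ee1 cc1 g0_def])
  have "real n ^ (r - 1) / real r ^ (r + 3) = N^(q+1) / R^(q+3+2)"
    unfolding N_def R_def q by simp
  also have "\<dots> < fk d (r-1) \<mu>" using fin fkval by linarith
  also have "\<dots> \<le> real (js V E (r+1))" using cnt1 cnt2 cnt3 by linarith
  finally show ?thesis .
qed
end
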